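(* For DPP-TS-alt, for every round $t$ and every $b\in[3,B]$, $$\mathbb{E}\big[\sigma_{t,b}(x_{t,b})\big]\le \mathbb{E}\big[\sigma_{t,b-1}(x_{t,b-1})\big].$$
   Context: Setting: $f\sim GP(0,k)$ on a domain $\mathcal{X}$. Fix batch size $B\ge 3$ and horizon $T$. In each round $t$ an algorithm selects $x_{t,1},\dots,x_{t,B}\in\mathcal{X}$ before receiving feedback from round $t$, then observes $y_{t,b}=f(x_{t,b})+\epsilon_{t,b}$, $\epsilon_{t,b}$ i.i.d. $\mathcal N(0,\sigma^2)$ independent of $f$. Index pairs $(t,b)$ are ordered lexicographically; $D_{t,b}$ is the set of pairs $(x_{t',b'},y_{t',b'})$ with $(t',b')\le (t,b)$; $D_{t,0}:=D_{t-1,B}$, $D_{0,B}:=\emptyset$. $\sigma^2_{t,b}(x)$ is the GP posterior variance of $f(x)$ given $D_{t,b-1}$ (depending only on observed locations). $p_{\max,t}$ is the law of $\arg\max_x\tilde f(x)$ with $\tilde f$ drawn from the posterior of $f$ given $D_{t-1,B}$. DPP-TS-alt: in round $t$, $x_{t,1}\sim p_{\max,t}$; then $(x_{t,2},\dots,x_{t,B})$ are drawn jointly from the distribution on $\mathcal{X}^{B-1}$ with density, with respect to $p_{\max,t}^{\otimes(B-1)}$, proportional to $\det(I+\sigma^{-2}K^{(t)}_X)$, where $X=(x_{t,2},\dots,x_{t,B})$ and $K^{(t)}_X$ is the matrix of the GP posterior covariance of $f$ given $D_{t-1,B}$ together with an observation at $x_{t,1}$, evaluated at the points of $X$. *)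

theory Defs
  imports "HOL-Probability.Probability" "Jordan_Normal_Form.Gauss_Jordan_Elimination" "Jordan_Normal_Form.Determinant"
begin

definition psd_kernel :: "('a \<Rightarrow> 'a \<Rightarrow> real) \<Rightarrow> bool" where
  "psd_kernel k \<longleftrightarrow> (\<forall>x y. k x y = k y x) \<and>
     (\<forall>(xs::'a list) (c::nat \<Rightarrow> real).
        0 \<le> (\<Sum>i<length xs. \<Sum>j<length xs. c i * c j * k (xs ! i) (xs ! j)))"

definition gram :: "('a \<Rightarrow> 'a \<Rightarrow> real) \<Rightarrow> 'a list \<Rightarrow> real mat" where
  "gram k xs = mat (length xs) (length xs) (\<lambda>(i, j). k (xs ! i) (xs ! j))"

definition kvec :: "('a \<Rightarrow> 'a \<Rightarrow> real) \<Rightarrow> 'a list \<Rightarrow> 'a \<Rightarrow> real vec" where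
  "kvec k xs x = vec (length xs) (\<lambda>i. k (xs ! i) x)"

text \<open>GP posterior covariance of f(x), f(y) given noisy observations (noise variance
  noise) at the locations xs: k(x,y) - k_xs(x)^T (K_xs + noise I)^{-1} k_xs(y).\<close>
definition post_cov :: "('a \<Rightarrow> 'a \<Rightarrow> real) \<Rightarrow> real \<Rightarrow> 'a list \<Rightarrow> 'a \<Rightarrow> 'a \<Rightarrow> real" where
  "post_cov k noise xs x y =
     (case mat_inverse (gram k xs + noise \<cdot>\<^sub>m 1\<^sub>m (length xs)) of
        Some Ai \<Rightarrow> k x y - scalar_prod (kvec k xs x) (Ai *\<^sub>v kvec k xs y)
      | None \<Rightarrow> 0)"

definition post_sd :: "('a \<Rightarrow> 'a \<Rightarrow> real) \<Rightarrow> real \<Rightarrow> 'a list \<Rightarrow> 'a \<Rightarrow> real" where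
  "post_sd k noise xs x = sqrt (post_cov k noise xs x x)"

text \<open>The batch (x_{t,1}, ..., x_{t,B}) with x_{t,1} = x1 and x_{t,i+2} = X i, i < m = B-1.\<close>
definition batch :: "'a \<Rightarrow> nat \<Rightarrow> (nat \<Rightarrow> 'a) \<Rightarrow> 'a list" where
  "batch x1 m X = x1 # map X [0..<m]"

text \<open>DPP weight det(I + noise^{-1} K^{(t)}_X), where K^{(t)} is the posterior covariance given
  the previous locations D (those of D_{t-1,B}) together with x1.\<close>
definition dpp_weight :: "('a \<Rightarrow> 'a \<Rightarrow> real) \<Rightarrow> real \<Rightarrow> 'a list \<Rightarrow> 'a \<Rightarrow> nat \<Rightarrow> (nat \<Rightarrow> 'a) \<Rightarrow> real" where
  "dpp_weight k noise D x1 m X =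
     det (1\<^sub>m m + (1 / noise) \<cdot>\<^sub>m mat m m (\<lambda>(i, j). post_cov k noise (D @ [x1]) (X i) (X j)))"

definition dpp_norm :: "('a \<Rightarrow> 'a \<Rightarrow> real) \<Rightarrow> real \<Rightarrow> 'a list \<Rightarrow> 'a measure \<Rightarrow> nat \<Rightarrow> 'a \<Rightarrow> ennreal" where
  "dpp_norm k noise D p B x1 =
     (\<integral>\<^sup>+ X. ennreal (dpp_weight k noise D x1 (B - 1) X) \<partial>(PiM {..<B - 1} (\<lambda>_. p)))"

text \<open>Expectation of a nonnegative function g of the round-t batch under DPP-TS-alt,
  given previous locations D and p = p_max,t: x_{t,1} ~ p, then (x_{t,2},...,x_{t,B}) has
  density proportional to the DPP weight w.r.t. p^{B-1}.\<close>
definition round_expect :: "('a \<Rightarrow> 'a \<Rightarrow> real) \<Rightarrow> real \<Rightarrow> 'a list \<Rightarrow> 'a measure \<Rightarrow> nat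
     \<Rightarrow> ('a list \<Rightarrow> ennreal) \<Rightarrow> ennreal" where
  "round_expect k noise D p B g =
     (\<integral>\<^sup>+ x1. (\<integral>\<^sup>+ X. ennreal (dpp_weight k noise D x1 (B - 1) X) * g (batch x1 (B - 1) X)
                   \<partial>(PiM {..<B - 1} (\<lambda>_. p))) / dpp_norm k noise D p B x1 \<partial>p)"

text \<open>sigma_{t,b}(x_{t,b}): posterior sd at the b-th batch point given D_{t,b-1}, i.e. the
  previous locations D together with x_{t,1},...,x_{t,b-1}.\<close>
definition sigma_sel :: "('a \<Rightarrow> 'a \<Rightarrow> real) \<Rightarrow> real \<Rightarrow> 'a list \<Rightarrow> nat \<Rightarrow> 'a list \<Rightarrow> real" where
  "sigma_sel k noise D b pts = post_sd k noise (D @ take (b - 1) pts) (pts ! (b - 1))"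

end

theory Submission
  imports Defs
begin


lemma quad_min:
  fixes Am :: "nat \<Rightarrow> nat \<Rightarrow> real" and u v a :: "nat \<Rightarrow> real"
  assumes sym: "\<And>i j. i < n \<Longrightarrow> j < n \<Longrightarrow> Am i j = Am j i"
    and sol: "\<And>i. i < n \<Longrightarrow> (\<Sum>j<n. Am i j * u j) = v i"
    and psd: "\<And>d. 0 \<le> (\<Sum>i<n. \<Sum>j<n. d i * d j * Am i j)"
  shows "c - (\<Sum>i<n. u i * v i) \<le> c - 2 * (\<Sum>i<n. a i * v i) + (\<Sum>i<n. \<Sum>j<n. a i * a j * Am i j)"
proof -
  define d where "d i = a i - u i" for i
  have a: "a i = u i + d i" for i by (simp add: d_def)
  have e1: "(\<Sum>i<n. \<Sum>j<n. a i * a j * Am i j) =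
      (\<Sum>i<n. \<Sum>j<n. u i * u j * Am i j) + (\<Sum>i<n. \<Sum>j<n. d i * u j * Am i j)
      + (\<Sum>i<n. \<Sum>j<n. u i * d j * Am i j) + (\<Sum>i<n. \<Sum>j<n. d i * d j * Am i j)"
    by (simp add: a algebra_simps sum.distrib)
  have e2: "(\<Sum>i<n. \<Sum>j<n. u i * d j * Am i j) = (\<Sum>i<n. \<Sum>j<n. d i * u j * Am i j)"
    by (subst sum.swap) (auto intro!: sum.cong simp: sym)
  have e3: "(\<Sum>i<n. \<Sum>j<n. w i * u j * Am i j) = (\<Sum>i<n. w i * v i)" for w
  proof -
    have "(\<Sum>i<n. \<Sum>j<n. w i * u j * Am i j) = (\<Sum>i<n. w i * (\<Sum>j<n. Am i j * u j))"
      by (simp add: sum_distrib_left algebra_simps)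
    also have "\<dots> = (\<Sum>i<n. w i * v i)" by (simp add: sol)
    finally show ?thesis .
  qed
  have e4: "(\<Sum>i<n. a i * v i) = (\<Sum>i<n. u i * v i) + (\<Sum>i<n. d i * v i)"
    by (simp add: a algebra_simps sum.distrib)
  show ?thesis using psd[of d] unfolding e1 e2 e4 e3[of u] e3[of d] by simp
qed

lemma psd_pos:
  fixes k :: "'a \<Rightarrow> 'a \<Rightarrow> real"
  assumes "psd_kernel k" "noise > 0"
  shows "noise * (\<Sum>i<length xs. d i ^ 2) \<le>
    (\<Sum>i<length xs. \<Sum>j<length xs. d i * d j * (k (xs!i) (xs!j) + (if i = j then noise else 0)))"
proof -
  let ?n = "length xs"
  have "(\<Sum>i<?n. \<Sum>j<?n. d i * d j * (k (xs!i) (xs!j) + (if i = j then noise else 0)))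
     = (\<Sum>i<?n. \<Sum>j<?n. d i * d j * k (xs!i) (xs!j)) + (\<Sum>i<?n. \<Sum>j<?n. d i * d j * (if i = j then noise else 0))"
    by (simp add: algebra_simps sum.distrib)
  also have "(\<Sum>i<?n. \<Sum>j<?n. d i * d j * (if i = j then noise else 0)) = noise * (\<Sum>i<?n. d i ^ 2)"
    by (simp add: sum_distrib_left power2_eq_square algebra_simps if_distrib sum.If_cases cong: if_cong)
  finally show ?thesis using assms(1) unfolding psd_kernel_def by auto
qed



definition Amat where "Amat k noise xs = gram k xs + noise \<cdot>\<^sub>m 1\<^sub>m (length xs)"

lemma Amat_carrier: "Amat k noise xs \<in> carrier_mat (length xs) (length xs)"
  by (simp add: Amat_def gram_def)

lemma Amat_index: "i < length xs \<Longrightarrow> j < length xs \<Longrightarrow>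
   Amat k noise xs $$ (i,j) = k (xs!i) (xs!j) + (if i = j then noise else 0)"
  by (simp add: Amat_def gram_def)

lemma Amat_inv:
  assumes "psd_kernel k" "noise > 0"
  shows "\<exists>Ai. mat_inverse (Amat k noise xs) = Some Ai \<and> Amat k noise xs * Ai = 1\<^sub>m (length xs)
      \<and> Ai \<in> carrier_mat (length xs) (length xs)"
proof -
  let ?n = "length xs" let ?A = "Amat k noise xs"
  have "det ?A \<noteq> 0"
  proof
    assume "det ?A = 0"
    then obtain v where v: "v \<in> carrier_vec ?n" "v \<noteq> 0\<^sub>v ?n" "?A *\<^sub>v v = 0\<^sub>v ?n"
      using det_0_iff_vec_prod_zero[OF Amat_carrier] by blast
    have "\<exists>i<?n. v $ i \<noteq> 0" using v(1,2) by (auto simp: vec_eq_iff)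
    then obtain i0 where i0: "i0 < ?n" "v $ i0 \<noteq> 0" by blast
    have "0 < (v $ i0)^2" using i0 by simp
    also have "\<dots> \<le> (\<Sum>i<?n. (v $ i)^2)"
      using i0 by (intro member_le_sum) auto
    finally have pos: "0 < noise * (\<Sum>i<?n. (v $ i)^2)" using assms(2) by simp
    have zero: "(\<Sum>j<?n. Amat k noise xs $$ (i,j) * v $ j) = 0" if "i < ?n" for i
    proof -
      have "(?A *\<^sub>v v) $ i = 0" using v(3) that by simp
      thus ?thesis using that Amat_carrier[of k noise xs] v(1)
        by (simp add: scalar_prod_def row_def atLeast0LessThan)
    qed
    have "(\<Sum>i<?n. \<Sum>j<?n. v$i * v$j * (k (xs!i) (xs!j) + (if i = j then noise else 0)))
        = (\<Sum>i<?n. v$i * (\<Sum>j<?n. Amat k noise xs $$ (i,j) * v $ j))"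
      by (auto simp: sum_distrib_left Amat_index algebra_simps intro!: sum.cong)
    also have "\<dots> = 0" by (simp add: zero)
    finally show False using psd_pos[OF assms, where xs=xs and d="\<lambda>i. v$i"] pos by simp
  qed
  hence "?A \<in> Units (ring_mat TYPE(real) ?n ())"
    by (intro det_non_zero_imp_unit Amat_carrier)
  hence "mat_inverse ?A \<noteq> None" using mat_inverse(1)[OF Amat_carrier[of k noise xs], where b="()"] by blast
  then obtain Ai where "mat_inverse ?A = Some Ai" by blast
  thus ?thesis using mat_inverse(2)[OF Amat_carrier] by blast
qed



lemma post_cov_expr:
  assumes "psd_kernel k" "noise > 0"
  shows "\<exists>u. (\<forall>i<length xs. (\<Sum>j<length xs. Amat k noise xs $$ (i,j) * u j) = k (xs!i) x)
     \<and> post_cov k noise xs x x = k x x - (\<Sum>i<length xs. u i * k (xs!i) x)"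
proof -
  let ?n = "length xs" let ?A = "Amat k noise xs"
  obtain Ai where Ai: "mat_inverse ?A = Some Ai" "?A * Ai = 1\<^sub>m ?n" "Ai \<in> carrier_mat ?n ?n"
    using Amat_inv[OF assms] by blast
  let ?w = "kvec k xs x"
  have w: "?w \<in> carrier_vec ?n" by (simp add: kvec_def)
  define uv where "uv = Ai *\<^sub>v ?w"
  have uv: "uv \<in> carrier_vec ?n" unfolding uv_def using Ai(3) w by (rule mult_mat_vec_carrier)
  have "?A *\<^sub>v uv = (?A * Ai) *\<^sub>v ?w" unfolding uv_def
    using Ai(3) w Amat_carrier[of k noise xs] by (simp add: assoc_mult_mat_vec)
  also have "\<dots> = ?w" using Ai(2) w by simp
  finally have Auv: "?A *\<^sub>v uv = ?w" .
  show ?thesis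
  proof (intro exI[of _ "\<lambda>i. uv $ i"] conjI allI impI)
    fix i assume i: "i < ?n"
    have "(?A *\<^sub>v uv) $ i = ?w $ i" using Auv by simp
    thus "(\<Sum>j<?n. ?A $$ (i,j) * uv $ j) = k (xs!i) x"
      using i uv Amat_carrier[of k noise xs]
      by (simp add: scalar_prod_def row_def atLeast0LessThan kvec_def)
  next
    have "post_cov k noise xs x x = k x x - scalar_prod ?w uv"
      unfolding post_cov_def Amat_def[symmetric] Ai(1) uv_def by simp
    also have "scalar_prod ?w uv = (\<Sum>i<?n. uv $ i * k (xs!i) x)"
      using uv by (simp add: scalar_prod_def kvec_def atLeast0LessThan mult.commute)
    finally show "post_cov k noise xs x x = k x x - (\<Sum>i<?n. uv $ i * k (xs!i) x)" .
  qed
qed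

lemma post_cov_mono:
  assumes "psd_kernel k" "noise > 0"
  shows "post_cov k noise (xs @ [y]) x x \<le> post_cov k noise xs x x"
proof -
  let ?n = "length xs"
  let ?ys = "xs @ [y]"
  obtain u where u: "\<forall>i<?n. (\<Sum>j<?n. Amat k noise xs $$ (i,j) * u j) = k (xs!i) x"
     "post_cov k noise xs x x = k x x - (\<Sum>i<?n. u i * k (xs!i) x)"
    using post_cov_expr[OF assms] by blast
  obtain u' where u': "\<forall>i<length ?ys. (\<Sum>j<length ?ys. Amat k noise ?ys $$ (i,j) * u' j) = k (?ys!i) x"
     "post_cov k noise ?ys x x = k x x - (\<Sum>i<length ?ys. u' i * k (?ys!i) x)"
    using post_cov_expr[OF assms] by blast
  define a where "a i = (if i < ?n then u i else 0)" for i
  have sym: "Amat k noise ?ys $$ (i,j) = Amat k noise ?ys $$ (j,i)" if "i < length ?ys" "j < length ?ys" for i j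
    using that assms(1) by (simp add: Amat_index psd_kernel_def)
  have psd: "0 \<le> (\<Sum>i<length ?ys. \<Sum>j<length ?ys. d i * d j * Amat k noise ?ys $$ (i,j))" for d
  proof -
    have "0 \<le> noise * (\<Sum>i<length ?ys. d i ^ 2)" using assms(2) by (simp add: sum_nonneg)
    also have "\<dots> \<le> (\<Sum>i<length ?ys. \<Sum>j<length ?ys. d i * d j * Amat k noise ?ys $$ (i,j))"
      using psd_pos[OF assms, where xs="?ys" and d=d] by (simp add: Amat_index)
    finally show ?thesis .
  qed
  have "post_cov k noise ?ys x x \<le> k x x - 2 * (\<Sum>i<length ?ys. a i * k (?ys!i) x)
      + (\<Sum>i<length ?ys. \<Sum>j<length ?ys. a i * a j * Amat k noise ?ys $$ (i,j))"
    unfolding u'(2) by (rule quad_min[OF sym _ psd]) (use u'(1) in auto)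
  also have "(\<Sum>i<length ?ys. a i * k (?ys!i) x) = (\<Sum>i<?n. u i * k (xs!i) x)"
    by (simp add: a_def nth_append)
  also have "(\<Sum>i<length ?ys. \<Sum>j<length ?ys. a i * a j * Amat k noise ?ys $$ (i,j))
      = (\<Sum>i<?n. \<Sum>j<?n. u i * u j * Amat k noise xs $$ (i,j))"
    by (simp add: a_def Amat_index nth_append)
  also have "\<dots> = (\<Sum>i<?n. u i * (\<Sum>j<?n. Amat k noise xs $$ (i,j) * u j))"
    by (simp add: sum_distrib_left algebra_simps)
  also have "\<dots> = (\<Sum>i<?n. u i * k (xs!i) x)" using u(1) by simp
  finally show ?thesis unfolding u(2) by simp
qed



lemma det_transpose_perm:
  fixes F :: "nat \<Rightarrow> nat \<Rightarrow> real"
  assumes "a < m" "c < m" "a \<noteq> c"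
  shows "Determinant.det (mat m m (\<lambda>(i,j). F (Transposition.transpose a c i) (Transposition.transpose a c j))) = Determinant.det (mat m m (\<lambda>(i,j). F i j))"
proof -
  let ?M = "mat m m (\<lambda>(i,j). F i j)"
  have car: "?M \<in> carrier_mat m m" by simp
  have eq: "mat m m (\<lambda>(i,j). F (Transposition.transpose a c i) (Transposition.transpose a c j)) = swaprows a c (swapcols a c ?M)"
  proof (rule eq_matI)
    have sc: "swapcols a c ?M $$ (i,j) = F i (Transposition.transpose a c j)" if "i < m" "j < m" for i j
      using that assms by (simp add: Transposition.transpose_def)
    fix i j assume ij: "i < dim_row (swaprows a c (swapcols a c ?M))" "j < dim_col (swaprows a c (swapcols a c ?M))"
    hence ij': "i < m" "j < m" by auto
    show "mat m m (\<lambda>(i,j). F (Transposition.transpose a c i) (Transposition.transpose a c j)) $$ (i, j) = swaprows a c (swapcols a c ?M) $$ (i, j)"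
      using ij' assms by (simp add: sc)
  qed auto
  show ?thesis unfolding eq
    using assms car by (simp add: det_swaprows det_swapcols)
qed

lemma dpp_weight_swap:
  assumes "a < m" "c < m" "a \<noteq> c"
  shows "dpp_weight k noise D x1 m (X \<circ> Transposition.transpose a c) = dpp_weight k noise D x1 m X"
proof -
  define F where "F i j = (if i = j then 1 else 0) + (1/noise) * post_cov k noise (D @ [x1]) (X i) (X j)" for i j
  have e: "dpp_weight k noise D x1 m Y = Determinant.det (mat m m (\<lambda>(i,j). (if i = j then 1 else 0) + (1/noise) * post_cov k noise (D @ [x1]) (Y i) (Y j)))" for Y
    unfolding dpp_weight_def by (rule arg_cong[where f=Determinant.det]) (rule eq_matI; auto)
  have "dpp_weight k noise D x1 m (X \<circ> Transposition.transpose a c) = Determinant.det (mat m m (\<lambda>(i,j). F (Transposition.transpose a c i) (Transposition.transpose a c j)))"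
  proof -
    have ti: "(Transposition.transpose a c i = Transposition.transpose a c j) = (i = j)" for i j
      by (auto simp: Transposition.transpose_def split: if_splits)
    show ?thesis unfolding e F_def by (simp only: ti comp_def)
  qed
  also have "\<dots> = Determinant.det (mat m m (\<lambda>(i,j). F i j))" by (rule det_transpose_perm[OF assms])
  also have "\<dots> = dpp_weight k noise D x1 m X" unfolding e F_def by simp
  finally show ?thesis .
qed



lemma nn_integral_invol_le:
  fixes g :: "'a \<Rightarrow> ennreal"
  assumes T: "T \<in> measurable M M" and inv: "\<And>x. x \<in> space M \<Longrightarrow> T (T x) = x"
    and pres: "distr M M T = M"
  shows "(\<integral>\<^sup>+x. g (T x) \<partial>M) \<le> (\<integral>\<^sup>+ x. g x \<partial>M)"
  unfolding nn_integral_def[of M "\<lambda>x. g (T x)"]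
proof (rule SUP_least)
  fix u assume u: "u \<in> {u. simple_function M u \<and> u \<le> (\<lambda>x. g (T x))}"
  hence su: "simple_function M u" and ule: "\<And>x. u x \<le> g (T x)" by (auto simp: le_fun_def)
  define v where "v x = (if x \<in> space M then u (T x) else 0)" for x
  have sv: "simple_function M v"
    using simple_function_comp[OF T su] by (subst simple_function_cong[of M v "\<lambda>x. u (T x)"]) (auto simp: v_def)
  have vle: "v x \<le> g x" for x
    using ule[of "T x"] inv[of x] by (auto simp: v_def)
  have "integral\<^sup>S M u = integral\<^sup>N M u" by (rule nn_integral_eq_simple_integral[OF su, symmetric])
  also have "\<dots> = integral\<^sup>N (distr M M T) u" by (simp add: pres)
  also have "\<dots> = (\<integral>\<^sup>+x. u (T x) \<partial>M)"
    by (rule nn_integral_distr[OF T]) (simp add: pres borel_measurable_simple_function[OF su])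
  also have "\<dots> = (\<integral>\<^sup>+x. v x \<partial>M)" by (rule nn_integral_cong) (simp add: v_def)
  also have "\<dots> \<le> (\<integral>\<^sup>+ x. g x \<partial>M)" by (rule nn_integral_mono) (simp add: vle)
  finally show "integral\<^sup>S M u \<le> (\<integral>\<^sup>+ x. g x \<partial>M)" .
qed



lemma dpp_weight_cong:
  assumes "\<And>i. i < m \<Longrightarrow> X i = Y i"
  shows "dpp_weight k noise D x1 m X = dpp_weight k noise D x1 m Y"
  unfolding dpp_weight_def
  by (rule arg_cong[where f=Determinant.det], rule arg_cong2[where f="(+)"], simp,
      rule arg_cong[where f="\<lambda>A. (1/noise) \<cdot>\<^sub>m A"], rule eq_matI) (auto simp: assms)

lemma batch_cong:
  assumes "\<And>i. i < m \<Longrightarrow> X i = Y i"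
  shows "batch x1 m X = batch x1 m Y"
  unfolding batch_def using assms by simp

lemma sigma_step:
  assumes "psd_kernel k" "noise > 0" "3 \<le> b" "b \<le> length pts"
  shows "sigma_sel k noise D b pts \<le> post_sd k noise (D @ take (b-2) pts) (pts ! (b-1))"
proof -
  have "take (b-1) pts = take (b-2) pts @ [pts ! (b-2)]"
    using assms(3,4) take_Suc_conv_app_nth[of "b-2" pts] by (simp add: Suc_diff_Suc numeral_2_eq_2)
  thus ?thesis unfolding sigma_sel_def post_sd_def
    using post_cov_mono[OF assms(1,2), of "D @ take (b-2) pts" "pts ! (b-2)" "pts ! (b-1)"]
    by simp
qed

lemma inner:
  assumes psd: "psd_kernel k" and noise: "noise > 0" and b3: "3 \<le> b" and bB: "b \<le> B"
    and p: "prob_space p"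
  shows "(\<integral>\<^sup>+ X. ennreal (dpp_weight k noise D x1 (B - 1) X) * ennreal (sigma_sel k noise D b (batch x1 (B - 1) X))
            \<partial>(PiM {..<B - 1} (\<lambda>_. p)))
       \<le> (\<integral>\<^sup>+ X. ennreal (dpp_weight k noise D x1 (B - 1) X) * ennreal (sigma_sel k noise D (b - 1) (batch x1 (B - 1) X))
            \<partial>(PiM {..<B - 1} (\<lambda>_. p)))"
proof -
  define m where "m = B - 1"
  define a where "a = b - 3"
  define c where "c = b - 2"
  define f where "f = Transposition.transpose a c"
  define I where "I = {..<m}"
  define P where "P = PiM I (\<lambda>_. p)"
  define w where "w X = ennreal (dpp_weight k noise D x1 m X)" for X
  define T where "T X = (\<lambda>n\<in>I. X (f n))" for X :: "nat \<Rightarrow> 'a"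
  have am: "a < m" and cm: "c < m" and ac: "a \<noteq> c" and ca: "c = Suc a"
    using b3 bB by (auto simp: a_def c_def m_def)
  have fI: "f n \<in> I \<longleftrightarrow> n \<in> I" for n
    using am cm by (auto simp: f_def I_def Transposition.transpose_def)
  have ff: "f (f n) = n" for n by (simp add: f_def)
  have lenb: "length (batch x1 m X) = B" for X using b3 bB by (simp add: batch_def m_def)
  have Tm: "T \<in> measurable P P" unfolding T_def P_def
    by (rule measurable_restrict) (use fI in auto)
  have Tinv: "T (T X) = X" if "X \<in> space P" for X
  proof
    fix n show "T (T X) n = X n"
      using that fI ff by (auto simp: T_def P_def space_PiM PiE_def extensional_def)
  qed
  have pres: "distr P P T = P"
  proof -
    have "inj_on f I" by (metis ff inj_on_inverseI)
    moreover have "f \<in> I \<rightarrow> I" using fI by auto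
    ultimately have "distr (PiM I (\<lambda>_. p)) (\<Pi>\<^sub>M i\<in>I. p) (\<lambda>\<omega>. \<lambda>n\<in>I. \<omega> (f n)) = (\<Pi>\<^sub>M i\<in>I. p)"
      using distr_PiM_reindex[of I "\<lambda>_. p" f I] p by auto
    moreover have "T = (\<lambda>X. \<lambda>n\<in>I. X (f n))" by (rule ext) (simp add: T_def)
    ultimately show ?thesis by (simp add: P_def)
  qed
  define G where "G X = w X * ennreal (sigma_sel k noise D (b - 1) (batch x1 m X))" for X
  have step1: "(\<integral>\<^sup>+ X. w X * ennreal (sigma_sel k noise D b (batch x1 m X)) \<partial>P)
      \<le> (\<integral>\<^sup>+ X. w X * ennreal (post_sd k noise (D @ take (b-2) (batch x1 m X)) (batch x1 m X ! (b-1))) \<partial>P)"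
    by (rule nn_integral_mono, rule mult_left_mono, rule ennreal_leI, rule sigma_step[OF psd noise b3])
       (use lenb bB in auto)
  have step2: "w X * ennreal (post_sd k noise (D @ take (b-2) (batch x1 m X)) (batch x1 m X ! (b-1))) = G (T X)"
    if X: "X \<in> space P" for X
  proof -
    have TX: "T X i = (X \<circ> f) i" if "i < m" for i using that by (simp add: T_def I_def)
    have wT: "w (T X) = w X"
    proof -
      have e1: "dpp_weight k noise D x1 m (X \<circ> f) = dpp_weight k noise D x1 m X"
        unfolding f_def by (rule dpp_weight_swap[OF am cm ac])
      have e2: "dpp_weight k noise D x1 m (T X) = dpp_weight k noise D x1 m (X \<circ> f)"
        by (rule dpp_weight_cong) (rule TX)
      show ?thesis unfolding w_def e2 e1 ..
    qed
    have bT: "batch x1 m (T X) = batch x1 m (X \<circ> f)" by (rule batch_cong) (simp add: TX)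
    have fsmall: "f i = i" if "i < a" for i using that ca by (simp add: f_def Transposition.transpose_def)
    have tk: "take (b - 2) (batch x1 m Y) = x1 # map Y [0..<a]" for Y
      using am ca by (simp add: batch_def c_def take_map a_def)
    have "sigma_sel k noise D (b - 1) (batch x1 m (X \<circ> f))
        = post_sd k noise (D @ take (b-2) (batch x1 m X)) (batch x1 m X ! (b-1))"
    proof -
      have "take (b - 1 - 1) (batch x1 m (X \<circ> f)) = take (b-2) (batch x1 m X)"
      proof -
        have bb: "b - 1 - 1 = b - 2" by simp
        show ?thesis unfolding bb tk using fsmall by simp
      qed
      moreover have "batch x1 m (X \<circ> f) ! (b - 1 - 1) = batch x1 m X ! (b-1)"
        using am cm ca b3 by (simp add: batch_def c_def a_def f_def numeral_3_eq_3 nth_Cons') (rule arg_cong[where f=X], arith)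
      ultimately show ?thesis unfolding sigma_sel_def by simp
    qed
    thus ?thesis unfolding G_def wT bT by simp
  qed
  have "(\<integral>\<^sup>+ X. w X * ennreal (post_sd k noise (D @ take (b-2) (batch x1 m X)) (batch x1 m X ! (b-1))) \<partial>P)
      = (\<integral>\<^sup>+ X. G (T X) \<partial>P)" by (rule nn_integral_cong) (rule step2)
  also have "\<dots> \<le> (\<integral>\<^sup>+ X. G X \<partial>P)" by (rule nn_integral_invol_le[OF Tm Tinv pres])
  finally show ?thesis using step1 unfolding G_def w_def P_def I_def m_def by simp
qed


theorem lemma7:
  fixes k :: "'a \<Rightarrow> 'a \<Rightarrow> real" and noise :: real and B t b :: nat
    and M :: "'h measure" and locs :: "'h \<Rightarrow> 'a list" and pmax :: "'h \<Rightarrow> 'a measure"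
  assumes "psd_kernel k"
    and "noise > 0"
    and "B \<ge> 3"
    and "t \<ge> 1"
    and "prob_space M"
    and "\<forall>h\<in>space M. prob_space (pmax h)"
    and "\<forall>h\<in>space M. length (locs h) = (t - 1) * B"
    and "\<forall>h\<in>space M. \<forall>x1\<in>space (pmax h). dpp_norm k noise (locs h) (pmax h) B x1 < \<infinity>"
    and "b \<in> {3..B}"
  shows "(\<integral>\<^sup>+ h. round_expect k noise (locs h) (pmax h) B
              (\<lambda>pts. ennreal (sigma_sel k noise (locs h) b pts)) \<partial>M)
         \<le> (\<integral>\<^sup>+ h. round_expect k noise (locs h) (pmax h) B
              (\<lambda>pts. ennreal (sigma_sel k noise (locs h) (b - 1) pts)) \<partial>M)"
proof (rule nn_integral_mono)
  fix h assume h: "h \<in> space M"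
  have p: "prob_space (pmax h)" using assms(6) h by blast
  have b3: "3 \<le> b" and bB: "b \<le> B" using assms(9) by auto
  show "round_expect k noise (locs h) (pmax h) B (\<lambda>pts. ennreal (sigma_sel k noise (locs h) b pts))
     \<le> round_expect k noise (locs h) (pmax h) B (\<lambda>pts. ennreal (sigma_sel k noise (locs h) (b - 1) pts))"
    unfolding round_expect_def
    by (rule nn_integral_mono, rule divide_right_mono_ennreal, rule inner[OF assms(1,2) b3 bB p])
qed

end
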